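(* In the setting below, for all $i,j=1,\dots,N$, every unit vector $v\in\mathbb{R}^d$ and every $n\in\mathbb{N}_0$, $$\langle x_i(t)-x_j(t),v\rangle\le e^{-K(t-\bar t)}\langle x_i(\bar t)-x_j(\bar t),v\rangle+\big(1-e^{-K(t-\bar t)}\big)d(t_{2n})$$ for all $t_{2n+1}\ge t\ge\bar t\ge t_{2n}$.
   Context: Setting: $N\ge2$; $\psi:\mathbb{R}^d\times\mathbb{R}^d\to\mathbb{R}$ positive, bounded, continuous, $K:=\|\psi\|_\infty$; $\{t_n\}_{n\in\mathbb{N}_0}$ increasing, nonnegative, $t_0=0$, $t_n\to\infty$; $\alpha(0)=1$, $\alpha=1$ on $(t_{2n},t_{2n+1})$, $\alpha=-1$ on $[t_{2n+1},t_{2n+2}]$; $\{x_i\}$ solves $x_i'(t)=\frac1{N-1}\sum_{j\ne i}\alpha(t)\psi(x_i(t),x_j(t))(x_j(t)-x_i(t))$, $t>0$, $x_i(0)=x_i^0\in\mathbb{R}^d$ (continuous, $C^1$ on each $(t_n,t_{n+1})$). $d(t):=\max_{i,j}|x_i(t)-x_j(t)|$. Standing assumptions: $t_{2n+2}-t_{2n+1}<\frac{\ln 2}{K}$ for all $n$; $\sum_{p\ge0}\ln\frac{e^{K(t_{2p+2}-t_{2p+1})}}{2-e^{K(t_{2p+2}-t_{2p+1})}}<\infty$; $\sum_{p\ge0}\ln\max\{1-e^{-K(t_{2p+1}-t_{2p})},1-\frac{\psi_0}{K}(1-e^{-K(t_{2p+1}-t_{2p})})\}=-\infty$, with $\psi_0=\min_{|y|,|z|\le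 M^0}\psi(y,z)$, $M^0=e^{K\sum_{p}(t_{2p+2}-t_{2p+1})}\max_i|x_i^0|$. *)

theory Defs
  imports "HOL-Analysis.Analysis"
begin

definition alpha :: "(nat \<Rightarrow> real) \<Rightarrow> real \<Rightarrow> real" where
  "alpha tt t = (if t = 0 then 1
                 else if (\<exists>n. tt (2*n) < t \<and> t < tt (2*n+1)) then 1 else -1)"

definition diam :: "nat \<Rightarrow> (nat \<Rightarrow> real \<Rightarrow> 'a::real_normed_vector) \<Rightarrow> real \<Rightarrow> real" where
  "diam N x t = Max {norm (x i t - x j t) | i j. i < N \<and> j < N}"

end

theory Submission
  imports Defs
begin

lemma inner_deriv: "(x has_vector_derivative D) (at t) \<Longrightarrow> ((\<lambda>s. inner (x s) (v::'a::euclidean_space)) has_real_derivative inner D v) (at t)"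
  using bounded_linear.has_vector_derivative[OF bounded_linear_inner_left, of x D "at t" v]
  by (simp add: has_real_derivative_iff_has_vector_derivative)

lemma inv_upper:
  fixes f :: "nat \<Rightarrow> real \<Rightarrow> real" and w :: "nat \<Rightarrow> nat \<Rightarrow> real \<Rightarrow> real"
  assumes N: "N \<ge> 2" and ab: "a \<le> b"
    and cont: "\<And>k. k<N \<Longrightarrow> continuous_on {a..b} (f k)"
    and der: "\<And>k t. k<N \<Longrightarrow> a<t \<Longrightarrow> t<b \<Longrightarrow> (f k has_real_derivative
        (1/(real N - 1)) * (\<Sum>j\<in>{..<N}-{k}. w k j t * (f j t - f k t))) (at t)"
    and wpos: "\<And>k j t. w k j t \<ge> 0"
    and k: "k<N" and t: "a \<le> t" "t \<le> b"
  shows "f k t \<le> Max ((\<lambda>k. f k a) ` {..<N})"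
proof -
  define M where "M = Max ((\<lambda>k. f k a) ` {..<N})"
  have fa: "f j a \<le> M" if "j<N" for j
    unfolding M_def using that by (intro Max_ge) auto
  have key: "f k t < M + e * (1 + t - a)"
    if k: "k<N" and t: "a \<le> t" "t \<le> c" and c: "c < b" and e: "e > 0" for k t c e
  proof (rule ccontr)
    assume neg: "\<not> f k t < M + e * (1 + t - a)"
    define T where "T = (\<Union>k<N. {s\<in>{a..c}. M + e * (1 + s - a) \<le> f k s})"
    have "closed T"
      unfolding T_def
    proof (intro closed_UN ballI)
      fix j assume "j \<in> {..<N}"
      then have "continuous_on {a..c} (f j)"
        using cont c by (meson continuous_on_subset atLeastAtMost_iff subsetI less_le_not_le order_trans lessThan_iff)
      then show "closed {s\<in>{a..c}. M + e * (1 + s - a) \<le> f j s}"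
        by (intro continuous_on_closed_Collect_le) (auto intro!: continuous_intros)
    qed auto
    moreover have "T \<subseteq> {a..c}" unfolding T_def by auto
    ultimately have "compact T"
      using compact_Int_closed[OF compact_Icc[of a c], of T] by (metis inf.absorb_iff2)
    moreover have "t \<in> T" using neg k t unfolding T_def by (auto simp: not_less)
    ultimately obtain s where sT: "s \<in> T" and smin: "\<And>s'. s' \<in> T \<Longrightarrow> s \<le> s'"
      using compact_attains_inf[of T] by blast
    from sT obtain k0 where k0: "k0 < N" "a \<le> s" "s \<le> c" "M + e * (1 + s - a) \<le> f k0 s"
      unfolding T_def by auto
    define mm where "mm = Max ((\<lambda>j. f j s) ` {..<N})"
    have "mm \<in> (\<lambda>j. f j s) ` {..<N}" unfolding mm_def using k0(1) by (intro Max_in) auto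
    then obtain m where m: "m < N" "f m s = mm" by auto
    have mge: "f j s \<le> f m s" if "j < N" for j
      unfolding m(2) mm_def using that by (intro Max_ge) auto
    have bar: "M + e * (1 + s - a) \<le> f m s" using mge[OF k0(1)] k0(4) by linarith
    have "s \<noteq> a" using bar fa[OF m(1)] e by auto
    then have sa: "a < s" using k0 by auto
    have sb: "s < b" using k0 c by auto
    define D where "D = (1/(real N - 1)) * (\<Sum>j\<in>{..<N}-{m}. w m j s * (f j s - f m s))"
    have "(\<Sum>j\<in>{..<N}-{m}. w m j s * (f j s - f m s)) \<le> 0"
      by (intro sum_nonpos mult_nonneg_nonpos) (auto simp: wpos mge)
    moreover have "1/(real N - 1) > 0" using N by auto
    ultimately have D0: "D \<le> 0" unfolding D_def by (metis less_eq_real_def mult_nonneg_nonpos)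
    have gd: "((\<lambda>r. f m r - (M + e * (1 + r - a))) has_real_derivative D - e) (at s)"
      unfolding D_def by (auto intro!: derivative_eq_intros der m sa sb)
    then obtain d where d: "d > 0" "\<And>h. h > 0 \<Longrightarrow> h < d \<Longrightarrow>
        f m s - (M + e * (1 + s - a)) < f m (s - h) - (M + e * (1 + (s - h) - a))"
      using DERIV_neg_dec_left[OF gd] D0 e by force
    obtain h where h0: "0 < h" "h < d" "h < s - a" using field_lbound_gt_zero[of d "s - a"] d(1) sa by auto
    have h: "h > 0" "h < d" "a \<le> s - h" using h0 by auto
    have "M + e * (1 + (s - h) - a) < f m (s - h)" using d(2)[OF h(1,2)] bar by linarith
    then have "s - h \<in> T" unfolding T_def using h k0 m by (auto intro!: bexI[of _ m])
    then show False using smin h by fastforce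
  qed
  have lt: "f k t \<le> M" if "a \<le> t" "t < b" for t
  proof (rule ccontr)
    assume "\<not> f k t \<le> M"
    define e where "e = (f k t - M) / (2 * (1 + t - a))"
    have e: "e > 0" unfolding e_def using \<open>\<not> f k t \<le> M\<close> that by auto
    have "e * (1 + t - a) = (f k t - M) / 2" unfolding e_def using that by (auto simp: field_simps)
    then show False using key[OF k that(1) order_refl that(2) e] \<open>\<not> f k t \<le> M\<close> by simp
  qed
  show ?thesis
  proof (cases "t < b")
    case True then show ?thesis using lt t M_def by auto
  next
    case False
    then have tb: "t = b" using t by auto
    show ?thesis
    proof (cases "a < b")
      case False then have "t = a" using tb t by auto
      then show ?thesis using fa[OF k] M_def by simp
    next
      case True
      have "closed {s\<in>{a..b}. f k s \<le> M}"
        by (intro continuous_on_closed_Collect_le cont k) (auto intro!: continuous_intros)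
      moreover have "{a..<b} \<subseteq> {s\<in>{a..b}. f k s \<le> M}" using lt by auto
      ultimately have "closure {a..<b} \<subseteq> {s\<in>{a..b}. f k s \<le> M}" by (rule closure_minimal[rotated])
      moreover have "b \<in> {a..b}" using True by simp
      ultimately have "b \<in> {s\<in>{a..b}. f k s \<le> M}" using True by (metis closure_atLeastLessThan subsetD)
      then show ?thesis using tb M_def by simp
    qed
  qed
qed

lemma decay_upper:
  fixes f :: "nat \<Rightarrow> real \<Rightarrow> real" and w :: "nat \<Rightarrow> nat \<Rightarrow> real \<Rightarrow> real"
  assumes N: "N \<ge> 2" and ab: "a \<le> b"
    and cont: "\<And>k. k<N \<Longrightarrow> continuous_on {a..b} (f k)"
    and der: "\<And>k t. k<N \<Longrightarrow> a<t \<Longrightarrow> t<b \<Longrightarrow> (f k has_real_derivative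
        (1/(real N - 1)) * (\<Sum>j\<in>{..<N}-{k}. w k j t * (f j t - f k t))) (at t)"
    and wpos: "\<And>k j t. w k j t \<ge> 0"
    and wle: "\<And>k j t. w k j t \<le> K"
    and i: "i<N" and t: "a \<le> tb" "tb \<le> t" "t \<le> b"
  shows "f i t \<le> Max ((\<lambda>k. f k a) ` {..<N}) + exp (- K * (t - tb)) * (f i tb - Max ((\<lambda>k. f k a) ` {..<N}))"
proof -
  define M where "M = Max ((\<lambda>k. f k a) ` {..<N})"
  have inv: "f j s \<le> M" if "j<N" "a \<le> s" "s \<le> b" for j s
    unfolding M_def using inv_upper[OF N ab cont der wpos that] by blast
  define g where "g s = exp (K * (s - tb)) * (f i s - M)" for s
  have "g t \<le> g tb"
  proof (rule DERIV_nonpos_imp_decreasing_open[of tb t g])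
    show "tb \<le> t" using t by simp
    have "continuous_on {tb..t} (f i)"
      using continuous_on_subset[OF cont[OF i], of "{tb..t}"] t by auto
    then show "continuous_on {tb..t} g" unfolding g_def by (auto intro!: continuous_intros)
  next
    fix s assume s: "tb < s" "s < t"
    then have sab: "a < s" "s < b" using t by auto
    define D where "D = (1/(real N - 1)) * (\<Sum>j\<in>{..<N}-{i}. w i j s * (f j s - f i s))"
    have dg: "(g has_real_derivative exp (K * (s - tb)) * (K * (f i s - M) + D)) (at s)"
      unfolding g_def D_def
      by (auto intro!: derivative_eq_intros der[OF i sab] simp: algebra_simps)
    have Mi: "M - f i s \<ge> 0" using inv[OF i] sab by fastforce
    have "(\<Sum>j\<in>{..<N}-{i}. w i j s * (f j s - f i s)) \<le> (\<Sum>j\<in>{..<N}-{i}. K * (M - f i s))"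
    proof (rule sum_mono)
      fix j assume "j \<in> {..<N}-{i}"
      then have "f j s \<le> M" using inv sab by fastforce
      then have "w i j s * (f j s - f i s) \<le> w i j s * (M - f i s)"
        by (intro mult_left_mono) (auto simp: wpos)
      also have "\<dots> \<le> K * (M - f i s)" by (intro mult_right_mono wle Mi)
      finally show "w i j s * (f j s - f i s) \<le> K * (M - f i s)" .
    qed
    also have "\<dots> = (real N - 1) * (K * (M - f i s))"
      using i N by (simp add: card_Diff_singleton of_nat_diff)
    finally have "D \<le> K * (M - f i s)"
      unfolding D_def using N by (simp add: field_simps)
    then have "exp (K * (s - tb)) * (K * (f i s - M) + D) \<le> 0"
      by (intro mult_nonneg_nonpos) (auto simp: algebra_simps)
    then show "\<exists>y. (g has_real_derivative y) (at s) \<and> y \<le> 0" using dg by blast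
  qed
  then have "exp (K * (t - tb)) * (f i t - M) \<le> f i tb - M" unfolding g_def by simp
  then have "exp (- K * (t - tb)) * (exp (K * (t - tb)) * (f i t - M)) \<le> exp (- K * (t - tb)) * (f i tb - M)"
    by (intro mult_left_mono) auto
  also have "exp (- K * (t - tb)) * (exp (K * (t - tb)) * (f i t - M)) = f i t - M"
    by (simp add: mult.assoc[symmetric] exp_add[symmetric])
  finally show ?thesis unfolding M_def[symmetric] by simp
qed


theorem proposition3p10:
  fixes N :: nat
    and psi :: "'a::euclidean_space \<Rightarrow> 'a \<Rightarrow> real"
    and tt :: "nat \<Rightarrow> real"
    and x :: "nat \<Rightarrow> real \<Rightarrow> 'a"
    and K :: real
  assumes N2: "N \<ge> 2"
    and psi_pos: "\<And>y z. psi y z > 0"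
    and psi_bdd: "bounded (range (\<lambda>(y, z). psi y z))"
    and psi_cont: "continuous_on UNIV (\<lambda>(y, z). psi y z)"
    and K_def: "K = (SUP p. \<bar>psi (fst p) (snd p)\<bar>)"
    and tt_mono: "strict_mono tt"
    and tt0: "tt 0 = 0"
    and tt_lim: "filterlim tt at_top sequentially"
    and x_cont: "\<And>i. i < N \<Longrightarrow> continuous_on {0..} (x i)"
    and x_ode: "\<And>i n t. i < N \<Longrightarrow> tt n < t \<Longrightarrow> t < tt (Suc n) \<Longrightarrow>
        (x i has_vector_derivative
          (1 / (real N - 1)) *\<^sub>R
            (\<Sum>j\<in>{..<N} - {i}. (alpha tt t * psi (x i t) (x j t)) *\<^sub>R (x j t - x i t))) (at t)"
    and short_neg: "\<And>n. tt (2*n+2) - tt (2*n+1) < ln 2 / K"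
    and sum_neg: "summable (\<lambda>p. ln (exp (K * (tt (2*p+2) - tt (2*p+1)))
                                   / (2 - exp (K * (tt (2*p+2) - tt (2*p+1))))))"
    and sum_pos: "filterlim (\<lambda>m. \<Sum>p<m. ln (max (1 - exp (- K * (tt (2*p+1) - tt (2*p))))
                     (1 - Inf {psi y z | y z.
                               norm y \<le> exp (K * (\<Sum>q. tt (2*q+2) - tt (2*q+1))) * (MAX i\<in>{..<N}. norm (x i 0))
                             \<and> norm z \<le> exp (K * (\<Sum>q. tt (2*q+2) - tt (2*q+1))) * (MAX i\<in>{..<N}. norm (x i 0))} / K
                          * (1 - exp (- K * (tt (2*p+1) - tt (2*p)))))))
           at_bot sequentially"
  shows "\<forall>i<N. \<forall>j<N. \<forall>v::'a. norm v = 1 \<longrightarrow> (\<forall>n t tb. tt (2*n) \<le> tb \<and> tb \<le> t \<and> t \<le> tt (2*n+1) \<longrightarrow>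
           inner (x i t - x j t) v
             \<le> exp (- K * (t - tb)) * inner (x i tb - x j tb) v
                + (1 - exp (- K * (t - tb))) * diam N x (tt (2*n)))"
proof (intro allI impI)
  fix i j n t tb and v :: 'a
  assume ij: "i < N" "j < N" and nv: "norm v = 1"
    and tn: "tt (2*n) \<le> tb \<and> tb \<le> t \<and> t \<le> tt (2*n+1)"
  define a where "a = tt (2*n)"
  define b where "b = tt (2*n+1)"
  have ab: "a \<le> b" unfolding a_def b_def using tt_mono by (simp add: strict_mono_less_eq)
  have a0: "0 \<le> a" unfolding a_def using tt_mono tt0 by (metis strict_mono_less_eq zero_le)
  obtain B where B: "\<And>y z. \<bar>psi y z\<bar> \<le> B"
    using psi_bdd unfolding bounded_iff by auto
  have bdd: "bdd_above (range (\<lambda>p. \<bar>psi (fst p) (snd p)\<bar>))"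
    using B by (auto intro!: bdd_aboveI)
  have psiK: "psi y z \<le> K" for y z
  proof -
    have "\<bar>psi (fst (y,z)) (snd (y,z))\<bar> \<le> K"
      unfolding K_def by (rule cSUP_upper[OF UNIV_I bdd])
    then show ?thesis by simp
  qed
  have K0: "K \<ge> 0" using psiK[of 0 0] psi_pos[of 0 0] by linarith
  have alpha1: "alpha tt s = 1" if "a < s" "s < b" for s
    using that unfolding alpha_def a_def b_def by auto
  have gen: "inner (x k t) u \<le> Max ((\<lambda>k. inner (x k a) u) ` {..<N})
      + exp (- K * (t - tb)) * (inner (x k tb) u - Max ((\<lambda>k. inner (x k a) u) ` {..<N}))"
    if k: "k < N" for k u
  proof (rule decay_upper[where f = "\<lambda>k s. inner (x k s) u" and w = "\<lambda>k j s. psi (x k s) (x j s)"])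
    show "N \<ge> 2" by (rule N2)
    show "a \<le> b" by (rule ab)
    show "continuous_on {a..b} (\<lambda>s. inner (x k s) u)" if "k < N" for k
    proof -
      have "continuous_on {a..b} (x k)"
        using continuous_on_subset[OF x_cont[OF that], of "{a..b}"] a0 by auto
      then show ?thesis by (auto intro!: continuous_intros)
    qed
    show "((\<lambda>s. inner (x k s) u) has_real_derivative
        (1/(real N - 1)) * (\<Sum>j\<in>{..<N}-{k}. psi (x k s) (x j s) * (inner (x j s) u - inner (x k s) u))) (at s)"
      if "k < N" "a < s" "s < b" for k s
    proof -
      have "(x k has_vector_derivative
          (1 / (real N - 1)) *\<^sub>R
            (\<Sum>j\<in>{..<N} - {k}. (alpha tt s * psi (x k s) (x j s)) *\<^sub>R (x j s - x k s))) (at s)"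
        using x_ode[of k "2*n" s] that unfolding a_def b_def by simp
      from inner_deriv[OF this, of u] show ?thesis
        using alpha1[OF that(2,3)]
        by (simp add: inner_sum_left inner_diff_left)
    qed
    show "psi (x k s) (x j s) \<ge> 0" for k j s using psi_pos[of "x k s" "x j s"] by simp
    show "psi (x k s) (x j s) \<le> K" for k j s by (rule psiK)
    show "k < N" by (rule k)
    show "a \<le> tb" "tb \<le> t" "t \<le> b" using tn unfolding a_def b_def by auto
  qed
  define E where "E = exp (- K * (t - tb))"
  define Mv where "Mv = Max ((\<lambda>k. inner (x k a) v) ` {..<N})"
  define Mw where "Mw = Max ((\<lambda>k. inner (x k a) (-v)) ` {..<N})"
  have g1: "inner (x i t) v \<le> Mv + E * (inner (x i tb) v - Mv)"
    using gen[OF ij(1), of v] unfolding Mv_def E_def by simp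
  have g2: "inner (x j t) (-v) \<le> Mw + E * (inner (x j tb) (-v) - Mw)"
    using gen[OF ij(2), of "-v"] unfolding Mw_def E_def by simp
  have E1: "E \<le> 1" unfolding E_def using K0 tn by (simp add: mult_nonneg_nonneg)
  have "Mv \<in> (\<lambda>k. inner (x k a) v) ` {..<N}" unfolding Mv_def using ij by (intro Max_in) auto
  then obtain p where p: "p < N" "Mv = inner (x p a) v" by auto
  have "Mw \<in> (\<lambda>k. inner (x k a) (-v)) ` {..<N}" unfolding Mw_def using ij by (intro Max_in) auto
  then obtain q where q: "q < N" "Mw = inner (x q a) (-v)" by auto
  have "Mv + Mw = inner (x p a - x q a) v" using p q by (simp add: inner_diff_left)
  also have "\<dots> \<le> norm (x p a - x q a) * norm v" by (rule norm_cauchy_schwarz)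
  also have "\<dots> = norm (x p a - x q a)" using nv by simp
  also have "\<dots> \<le> diam N x a"
  proof -
    have fin: "finite {norm (x i a - x j a) | i j. i < N \<and> j < N}"
    proof -
      have "{norm (x i a - x j a) | i j. i < N \<and> j < N} = (\<lambda>(i,j). norm (x i a - x j a)) ` ({..<N} \<times> {..<N})"
        by auto
      then show ?thesis by simp
    qed
    show ?thesis unfolding diam_def
      by (rule Max_ge[OF fin]) (use p q in auto)
  qed
  finally have MD: "Mv + Mw \<le> diam N x a" .
  have "inner (x i t - x j t) v \<le> E * inner (x i tb - x j tb) v + (1 - E) * (Mv + Mw)"
    using g1 g2 by (simp add: inner_diff_left algebra_simps)
  also have "\<dots> \<le> E * inner (x i tb - x j tb) v + (1 - E) * diam N x a"
    using E1 MD by (intro add_left_mono mult_left_mono) auto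
  finally show "inner (x i t - x j t) v
             \<le> exp (- K * (t - tb)) * inner (x i tb - x j tb) v
                + (1 - exp (- K * (t - tb))) * diam N x (tt (2*n))"
    unfolding E_def a_def .
qed

end
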